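(* Let $\alpha_1,\alpha_2>0$ and set \[ C_{1,2}:=\frac{\mathbb{E}[S_{11}S_{21}]}{1-\mathbb{E}[(1-S_{11})(1-S_{21})]}\sqrt{\frac{(2\mathbb{E}[S_{11}]-\mathbb{E}[S_{11}^2])(2\mathbb{E}[S_{21}]-\mathbb{E}[S_{21}^2])}{\mathbb{E}[S_{11}^2]\,\mathbb{E}[S_{21}^2]}}. \] (a) If $(S_{11},S_{21})=(V_0V_1,V_0V_2)$ with $V_0,V_1,V_2$ independent, $V_0\sim Beta(1+\alpha_1,\alpha_2)$, $V_1,V_2\sim Beta(1,\alpha_1)$, then \[ C_{1,2}=\frac{(\alpha_1+\alpha_2+1)(\alpha_1+2)}{2(\alpha_1+1)(\alpha_1+\alpha_2+2)-(\alpha_1+2)}. \] (b) If $(S_{11},S_{21})=(V_0V_1,V_0)$ with $V_0,V_1$ independent, $V_0\sim Beta(1,\alpha_1)$, $V_1\sim Beta(1+\alpha_1,\alpha_2)$, then \[ C_{1,2}=\frac{2(\alpha_1+1)}{(\alpha_1+2)(2\alpha_1+\alpha_2+1)-\alpha_1}\sqrt{(\alpha_1+1)(\alpha_1+\alpha_2+1)}. \]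
   Context: In the paper $C_{1,2}$ is the correlation $\mathrm{Cor}(G_1(A),G_2(A))$ of two stick-breaking random measures with common atoms and i.i.d. stick vectors distributed as $(S_{11},S_{21})$; the claim here is the explicit evaluation of $C_{1,2}$. *)

theory Defs
  imports "HOL-Probability.Probability"
begin

definition beta_density :: "real \<Rightarrow> real \<Rightarrow> real \<Rightarrow> ennreal" where
  "beta_density a b x =
     ennreal (indicator {0<..<1} x * x powr (a - 1) * (1 - x) powr (b - 1) / Beta a b)"

definition C12 :: "'a measure \<Rightarrow> ('a \<Rightarrow> real) \<Rightarrow> ('a \<Rightarrow> real) \<Rightarrow> real" where
  "C12 M S1 S2 =
     (integral\<^sup>L M (\<lambda>w. S1 w * S2 w)) /
       (1 - integral\<^sup>L M (\<lambda>w. (1 - S1 w) * (1 - S2 w))) *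
     sqrt (((2 * integral\<^sup>L M S1 - integral\<^sup>L M (\<lambda>w. (S1 w)\<^sup>2)) *
            (2 * integral\<^sup>L M S2 - integral\<^sup>L M (\<lambda>w. (S2 w)\<^sup>2))) /
           (integral\<^sup>L M (\<lambda>w. (S1 w)\<^sup>2) * integral\<^sup>L M (\<lambda>w. (S2 w)\<^sup>2)))"

end

theory Submission
  imports Defs
begin


lemma Beta_pos': "p > 0 \<Longrightarrow> q > 0 \<Longrightarrow> Beta p q > (0::real)"
  unfolding Beta_def by (simp add: Gamma_real_pos)

lemma beta_AE:
  assumes "p > 0" "q > 0" "distributed M lborel X (beta_density p q)"
  shows "AE w in M. 0 < X w \<and> X w < 1"
proof -
  have Xm[measurable]: "X \<in> measurable M lborel" using assms(3) by (rule distributed_measurable)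
  have Xb[measurable]: "X \<in> borel_measurable M" using Xm by simp
  have fm: "beta_density p q \<in> borel_measurable lborel" using assms(3) by (rule distributed_borel_measurable)
  have "AE x in distr M lborel X. 0 < x \<and> x < 1"
    unfolding distributed_distr_eq_density[OF assms(3)] AE_density[OF fm]
    by (auto simp: beta_density_def indicator_def)
  thus ?thesis by (subst (asm) AE_distr_iff) auto
qed

lemma beta_moment:
  assumes P: "prob_space M" and pq: "p > 0" "q > 0" and D: "distributed M lborel X (beta_density p q)"
  shows "integrable M (\<lambda>w. X w ^ k) \<and> integral\<^sup>L M (\<lambda>w. X w ^ k) = Beta (p + real k) q / Beta p q"
proof -
  interpret prob_space M by (rule P)
  have Xm[measurable]: "X \<in> measurable M lborel" using D by (rule distributed_measurable)
  have Xb[measurable]: "X \<in> borel_measurable M" using Xm by simp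
  have AE: "AE w in M. 0 < X w \<and> X w < 1" by (rule beta_AE[OF pq D])
  have int: "integrable M (\<lambda>w. X w ^ k)"
  proof (rule integrable_const_bound[where B=1])
    show "AE w in M. norm (X w ^ k) \<le> 1" using AE
      by eventually_elim (auto simp: abs_less_iff intro!: power_le_one)
  qed simp
  have B: "Beta p q > 0" unfolding Beta_def using pq by (simp add: Gamma_real_pos)
  have "integral\<^sup>L M (\<lambda>w. X w ^ k) = enn2real (\<integral>\<^sup>+ w. ennreal (X w ^ k) \<partial>M)"
    by (rule integral_eq_nn_integral) (use AE in auto)
  also have "(\<integral>\<^sup>+ w. ennreal (X w ^ k) \<partial>M) = (\<integral>\<^sup>+ x. beta_density p q x * ennreal (x ^ k) \<partial>lborel)"
    by (rule distributed_nn_integral[OF D, symmetric]) simp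
  also have "\<dots> = (\<integral>\<^sup>+ x. ennreal (indicator {0<..<1} x * (x powr (p + real k - 1) * (1 - x) powr (q - 1) / Beta p q)) \<partial>lborel)"
  proof (rule nn_integral_cong)
    fix x :: real
    show "beta_density p q x * ennreal (x ^ k) = ennreal (indicator {0<..<1} x * (x powr (p + real k - 1) * (1 - x) powr (q - 1) / Beta p q))"
    proof (cases "x \<in> {0<..<1}")
      case True
      hence x: "x > 0" by auto
      have "x powr (p + real k - 1) = x powr (p - 1) * x ^ k"
        using x by (simp add: powr_add[symmetric] powr_realpow[symmetric] algebra_simps)
      thus ?thesis using True B
        by (simp add: beta_density_def ennreal_mult'[symmetric] ennreal_mult''[symmetric])
    qed (simp add: beta_density_def)
  qed
  also have "\<dots> = ennreal (Beta (p + real k) q / Beta p q)"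
  proof -
    have "((\<lambda>t. t powr (p + real k - 1) * (1 - t) powr (q - 1)) has_integral Beta (p + real k) q) {0<..<1}"
      using has_integral_Beta_real[of "p + real k" q] pq by (simp add: has_integral_Icc_iff_Ioo)
    hence "((\<lambda>t. t powr (p + real k - 1) * (1 - t) powr (q - 1) / Beta p q) has_integral Beta (p + real k) q / Beta p q) {0<..<1}"
      by (rule has_integral_divide)
    from nn_integral_has_integral_lebesgue[OF _ this] B show ?thesis by simp
  qed
  finally show ?thesis using int B pq
    by (simp add: Beta_pos' divide_nonneg_pos less_imp_le)
qed

lemma beta_m1:
  assumes "p > 0" "q > 0" shows "Beta (p + real (1::nat)) q / Beta p q = p / (p + q)"
proof -
  have np: "p \<notin> \<int>\<^sub>\<le>\<^sub>0" using assms nonpos_Ints_nonpos by force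
  have "(p + q) * Beta (p + 1) q = p * Beta p q" by (rule Beta_plus1_left[OF np])
  thus ?thesis using Beta_pos'[OF assms] assms by (simp add: field_simps)
qed

lemma beta_m2:
  assumes "p > 0" "q > 0" shows "Beta (p + real (2::nat)) q / Beta p q = p * (p + 1) / ((p + q) * (p + q + 1))"
proof -
  have np: "p \<notin> \<int>\<^sub>\<le>\<^sub>0" using assms nonpos_Ints_nonpos by force
  have np1: "p + 1 \<notin> \<int>\<^sub>\<le>\<^sub>0" using assms nonpos_Ints_nonpos by force
  have 1: "(p + q) * Beta (p + 1) q = p * Beta p q" by (rule Beta_plus1_left[OF np])
  have 2: "(p + 1 + q) * Beta (p + 1 + 1) q = (p + 1) * Beta (p + 1) q" by (rule Beta_plus1_left[OF np1])
  have a: "Beta (p + 1) q = p * Beta p q / (p + q)" using 1 assms by (simp add: field_simps)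
  have b: "Beta (p + 2) q = (p + 1) * Beta (p + 1) q / (p + q + 1)"
    using 2 assms by (simp add: field_simps add_ac)
  have "Beta (p + 2) q = (p + 1) * p * Beta p q / ((p + q) * (p + q + 1))"
    unfolding b a by simp
  moreover have "(p + q) * (p + q + 1) > 0" using assms by simp
  ultimately show ?thesis using Beta_pos'[OF assms] by simp
qed



lemma beta_vals:
  assumes P: "prob_space M" and pq: "p > 0" "q > 0" and D: "distributed M lborel X (beta_density p q)"
  shows "\<And>k. integrable M (\<lambda>w. X w ^ k)"
    and "integral\<^sup>L M (\<lambda>w. X w ^ 0) = 1"
    and "integral\<^sup>L M (\<lambda>w. X w ^ 1) = p / (p + q)"
    and "integral\<^sup>L M (\<lambda>w. X w ^ 2) = p * (p + 1) / ((p + q) * (p + q + 1))"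
proof -
  show "\<And>k. integrable M (\<lambda>w. X w ^ k)" using beta_moment[OF assms] by blast
  show "integral\<^sup>L M (\<lambda>w. X w ^ 0) = 1" using beta_moment[OF assms, of 0] Beta_pos'[OF pq] by simp
  show "integral\<^sup>L M (\<lambda>w. X w ^ 1) = p / (p + q)" using beta_moment[OF assms, of 1] beta_m1[OF pq] by simp
  show "integral\<^sup>L M (\<lambda>w. X w ^ 2) = p * (p + 1) / ((p + q) * (p + q + 1))"
    using beta_moment[OF assms, of 2] beta_m2[OF pq] by simp
qed

lemma indep_prod_moments:
  fixes V :: "'i \<Rightarrow> 'a \<Rightarrow> real"
  assumes P: "prob_space M" and fin: "finite I" and ind: "prob_space.indep_vars M (\<lambda>_. borel) V I"
    and int: "\<And>i k. i \<in> I \<Longrightarrow> integrable M (\<lambda>w. V i w ^ k)"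
  shows "integrable M (\<lambda>w. \<Prod>i\<in>I. V i w ^ k i) \<and>
         integral\<^sup>L M (\<lambda>w. \<Prod>i\<in>I. V i w ^ k i) = (\<Prod>i\<in>I. integral\<^sup>L M (\<lambda>w. V i w ^ k i))"
proof -
  interpret prob_space M by (rule P)
  have ind2: "indep_vars (\<lambda>_. borel) (\<lambda>i w. (\<lambda>x::real. x ^ k i) (V i w)) I"
    by (rule indep_vars_compose2[OF ind]) simp
  show ?thesis
    using indep_vars_lebesgue_integral[OF fin ind2] indep_vars_integrable[OF fin ind2] int by simp
qed

lemma E_one_minus:
  fixes f g :: "'a \<Rightarrow> real"
  assumes P: "prob_space M" and "integrable M f" "integrable M g" "integrable M (\<lambda>w. f w * g w)"
  shows "integral\<^sup>L M (\<lambda>w. (1 - f w) * (1 - g w)) =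
         1 - integral\<^sup>L M f - integral\<^sup>L M g + integral\<^sup>L M (\<lambda>w. f w * g w)"
proof -
  interpret prob_space M by (rule P)
  have "(\<lambda>w. (1 - f w) * (1 - g w)) = (\<lambda>w. ((1 - f w) - g w) + f w * g w)"
    by (auto simp: fun_eq_iff algebra_simps)
  hence "integral\<^sup>L M (\<lambda>w. (1 - f w) * (1 - g w)) = integral\<^sup>L M (\<lambda>w. ((1 - f w) - g w) + f w * g w)"
    by simp
  also have "\<dots> = integral\<^sup>L M (\<lambda>w. (1 - f w) - g w) + integral\<^sup>L M (\<lambda>w. f w * g w)"
    using assms by (intro Bochner_Integration.integral_add) auto
  also have "integral\<^sup>L M (\<lambda>w. (1 - f w) - g w) = integral\<^sup>L M (\<lambda>w. 1 - f w) - integral\<^sup>L M g"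
    using assms by (intro Bochner_Integration.integral_diff) auto
  also have "integral\<^sup>L M (\<lambda>w. 1 - f w) = integral\<^sup>L M (\<lambda>w. 1) - integral\<^sup>L M f"
    using assms by (intro Bochner_Integration.integral_diff) auto
  finally show ?thesis by (simp add: prob_space)
qed



lemma partA:
  fixes M :: "'a measure" and a1 a2 :: real and V :: "nat \<Rightarrow> 'a \<Rightarrow> real"
  assumes P: "prob_space M" and a: "a1 > 0" and b: "a2 > 0"
    and ind: "prob_space.indep_vars M (\<lambda>_. borel) V {0, 1, 2}"
    and D0: "distributed M lborel (V 0) (beta_density (1 + a1) a2)"
    and D1: "distributed M lborel (V 1) (beta_density 1 a1)"
    and D2: "distributed M lborel (V 2) (beta_density 1 a1)"
  shows "C12 M (\<lambda>w. V 0 w * V 1 w) (\<lambda>w. V 0 w * V 2 w) =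
              (a1 + a2 + 1) * (a1 + 2) / (2 * (a1 + 1) * (a1 + a2 + 2) - (a1 + 2))"
proof -
  have a1': "1 + a1 > 0" using a by simp
  note v0 = beta_vals[OF P a1' b D0]
  note v1 = beta_vals[OF P _ a D1, simplified]
  note v2 = beta_vals[OF P _ a D2, simplified]
  have intk: "\<And>i k. i \<in> {0,1,2} \<Longrightarrow> integrable M (\<lambda>w. V i w ^ k)"
    using v0(1) v1(1) v2(1) by auto
  have E: "\<And>x y z. integrable M (\<lambda>w. V 0 w ^ x * (V 1 w ^ y * V 2 w ^ z)) \<and>
     integral\<^sup>L M (\<lambda>w. V 0 w ^ x * (V 1 w ^ y * V 2 w ^ z)) =
     integral\<^sup>L M (\<lambda>w. V 0 w ^ x) * (integral\<^sup>L M (\<lambda>w. V 1 w ^ y) * integral\<^sup>L M (\<lambda>w. V 2 w ^ z))"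
  proof -
    fix x y z
    show "?thesis x y z"
      using indep_prod_moments[OF P _ ind intk, of "\<lambda>i. if i = 0 then x else if i = 1 then y else z"]
      by simp
  qed
  obtain x y :: real where x: "1 + a1 = x" and y: "1 + a1 + a2 = y" by blast
  have xp: "x > 1" and yp: "y > x" using x y a b by auto
  have h: "y \<noteq> 0" "y + 1 \<noteq> 0" "x \<noteq> 0" using xp yp by auto
  note v0' = v0[unfolded y, unfolded x]
  have x1: "1 + a1 + 1 = x + 1" "a1 + 1 = x" "a1 + 2 = x + 1" using x by auto
  have y1: "1 + a1 + a2 + 1 = y + 1" "a1 + a2 + 1 = y" "a1 + a2 + 2 = y + 1" using y by auto
  have v1': "integral\<^sup>L M (\<lambda>w. V 1 w) = 1 / x" "integral\<^sup>L M (\<lambda>w. (V 1 w)^2) = 2 / (x * (x + 1))"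
    using v1(3,4) x by (simp_all add: add_ac)
  have v2': "integral\<^sup>L M (\<lambda>w. V 2 w) = 1 / x" "integral\<^sup>L M (\<lambda>w. (V 2 w)^2) = 2 / (x * (x + 1))"
    using v2(3,4) x by (simp_all add: add_ac)
  define u where "u = 1 / y"
  define v where "v = 2 / (y * (y + 1))"
  define c where "c = (x + 1) / (x * y * (y + 1))"
  have s1: "integral\<^sup>L M (\<lambda>w. V 0 w * V 1 w) = u" and s1i: "integrable M (\<lambda>w. V 0 w * V 1 w)"
  proof -
    have "integral\<^sup>L M (\<lambda>w. V 0 w * V 1 w) = x / y * (1 / x)"
      using E[of 1 1 0] v0' v1' v2(2) by simp
    thus "integral\<^sup>L M (\<lambda>w. V 0 w * V 1 w) = u" using xp by (simp add: u_def)
    show "integrable M (\<lambda>w. V 0 w * V 1 w)" using E[of 1 1 0] by simp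
  qed
  have s2: "integral\<^sup>L M (\<lambda>w. V 0 w * V 2 w) = u" and s2i: "integrable M (\<lambda>w. V 0 w * V 2 w)"
  proof -
    have "integral\<^sup>L M (\<lambda>w. V 0 w * V 2 w) = x / y * (1 / x)"
      using E[of 1 0 1] v0' v2' v1(2) by simp
    thus "integral\<^sup>L M (\<lambda>w. V 0 w * V 2 w) = u" using xp by (simp add: u_def)
    show "integrable M (\<lambda>w. V 0 w * V 2 w)" using E[of 1 0 1] by simp
  qed
  have q1: "integral\<^sup>L M (\<lambda>w. (V 0 w * V 1 w)\<^sup>2) = v"
  proof -
    have "integral\<^sup>L M (\<lambda>w. (V 0 w * V 1 w)\<^sup>2) = x * (x + 1) / (y * (y + 1)) * (2 / (x * (x + 1)))"
      using E[of 2 2 0] v0' v1' v2(2) by (simp add: power_mult_distrib)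
    thus ?thesis using xp yp by (simp add: v_def)
  qed
  have q2: "integral\<^sup>L M (\<lambda>w. (V 0 w * V 2 w)\<^sup>2) = v"
  proof -
    have "integral\<^sup>L M (\<lambda>w. (V 0 w * V 2 w)\<^sup>2) = x * (x + 1) / (y * (y + 1)) * (2 / (x * (x + 1)))"
      using E[of 2 0 2] v0' v2' v1(2) by (simp add: power_mult_distrib)
    thus ?thesis using xp yp by (simp add: v_def)
  qed
  have eq12: "(\<lambda>w. V 0 w * V 1 w * (V 0 w * V 2 w)) = (\<lambda>w. V 0 w ^ 2 * (V 1 w ^ 1 * V 2 w ^ 1))"
    by (auto simp: fun_eq_iff power2_eq_square)
  have p12: "integral\<^sup>L M (\<lambda>w. V 0 w * V 1 w * (V 0 w * V 2 w)) = c"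
    and p12i: "integrable M (\<lambda>w. V 0 w * V 1 w * (V 0 w * V 2 w))"
  proof -
    have "integral\<^sup>L M (\<lambda>w. V 0 w * V 1 w * (V 0 w * V 2 w)) = x * (x + 1) / (y * (y + 1)) * (1 / x * (1 / x))"
      unfolding eq12 using E[of 2 1 1] v0' v1' v2' by simp
    also have "\<dots> = c" using xp yp unfolding c_def
      by (simp add: divide_simps)
    finally show "integral\<^sup>L M (\<lambda>w. V 0 w * V 1 w * (V 0 w * V 2 w)) = c" .
    show "integrable M (\<lambda>w. V 0 w * V 1 w * (V 0 w * V 2 w))" unfolding eq12 using E[of 2 1 1] by simp
  qed
  have om: "integral\<^sup>L M (\<lambda>w. (1 - V 0 w * V 1 w) * (1 - V 0 w * V 2 w)) = 1 - u - u + c"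
    using E_one_minus[OF P s1i s2i p12i] s1 s2 p12 by simp
  have sq: "sqrt ((2 * u - v) * (2 * u - v) / (v * v)) = y"
  proof -
    have "(2 * u - v) / v = y" using xp yp using h unfolding u_def v_def by (simp add: divide_simps)
    moreover have "(2 * u - v) * (2 * u - v) / (v * v) = ((2 * u - v) / v)^2"
      by (simp add: power2_eq_square)
    ultimately have "(2 * u - v) * (2 * u - v) / (v * v) = y^2" by simp
    thus ?thesis using yp xp by simp
  qed
  have "C12 M (\<lambda>w. V 0 w * V 1 w) (\<lambda>w. V 0 w * V 2 w) = c / (1 - (1 - u - u + c)) * y"
    unfolding C12_def s1 s2 q1 q2 p12 om sq ..
  also have "\<dots> = y * (x + 1) / (2 * x * (y + 1) - (x + 1))"
  proof -
    have d: "2 * x * (y + 1) - (x + 1) > 0" using xp yp by (simp add: algebra_simps) (smt (verit) mult_less_cancel_left1 mult_pos_pos)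
    have "1 - (1 - u - u + c) = (2 * x * (y + 1) - (x + 1)) / (x * y * (y + 1))"
      using h unfolding u_def c_def apply (simp add: divide_simps) by algebra
    thus ?thesis using h d unfolding c_def by (simp add: divide_simps)
  qed
  also have "\<dots> = (a1 + a2 + 1) * (a1 + 2) / (2 * (a1 + 1) * (a1 + a2 + 2) - (a1 + 2))"
    unfolding x1 y1 ..
  finally show ?thesis .
qed

lemma partB:
  fixes M :: "'a measure" and a1 a2 :: real and V :: "nat \<Rightarrow> 'a \<Rightarrow> real"
  assumes P: "prob_space M" and a: "a1 > 0" and b: "a2 > 0"
    and ind: "prob_space.indep_vars M (\<lambda>_. borel) V {0, 1}"
    and D0: "distributed M lborel (V 0) (beta_density 1 a1)"
    and D1: "distributed M lborel (V 1) (beta_density (1 + a1) a2)"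
  shows "C12 M (\<lambda>w. V 0 w * V 1 w) (V 0) =
              2 * (a1 + 1) / ((a1 + 2) * (2 * a1 + a2 + 1) - a1) *
              sqrt ((a1 + 1) * (a1 + a2 + 1))"
proof -
  have a1': "1 + a1 > 0" using a by simp
  note v0 = beta_vals[OF P _ a D0, simplified]
  note v1 = beta_vals[OF P a1' b D1]
  have intk: "\<And>i k. i \<in> {0,1} \<Longrightarrow> integrable M (\<lambda>w. V i w ^ k)"
    using v0(1) v1(1) by auto
  have E: "\<And>x y. integrable M (\<lambda>w. V 0 w ^ x * V 1 w ^ y) \<and>
     integral\<^sup>L M (\<lambda>w. V 0 w ^ x * V 1 w ^ y) =
     integral\<^sup>L M (\<lambda>w. V 0 w ^ x) * integral\<^sup>L M (\<lambda>w. V 1 w ^ y)"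
  proof -
    fix x y
    show "?thesis x y"
      using indep_prod_moments[OF P _ ind intk, of "\<lambda>i. if i = 0 then x else y"]
      by simp
  qed
  obtain x y :: real where x: "1 + a1 = x" and y: "1 + a1 + a2 = y" by blast
  have xp: "x > 1" and yp: "y > x" using x y a b by auto
  have h: "y \<noteq> 0" "y + 1 \<noteq> 0" "x \<noteq> 0" "x + 1 \<noteq> 0" using xp yp by auto
  note v1' = v1[unfolded y, unfolded x]
  have x1: "a1 + 1 = x" "a1 + 2 = x + 1" "a1 = x - 1" using x by auto
  have y1: "a1 + a2 + 1 = y" "2 * a1 + a2 + 1 = x + y - 1" using x y by auto
  have v0': "integral\<^sup>L M (\<lambda>w. V 0 w) = 1 / x" "integral\<^sup>L M (\<lambda>w. (V 0 w)^2) = 2 / (x * (x + 1))"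
    using v0(3,4) x by (simp_all add: add_ac)
  define u where "u = 1 / y"
  define v where "v = 2 / (y * (y + 1))"
  define e where "e = 1 / x"
  define f where "f = 2 / (x * (x + 1))"
  define c where "c = 2 / ((x + 1) * y)"
  have s1: "integral\<^sup>L M (\<lambda>w. V 0 w * V 1 w) = u" and s1i: "integrable M (\<lambda>w. V 0 w * V 1 w)"
  proof -
    have "integral\<^sup>L M (\<lambda>w. V 0 w * V 1 w) = 1 / x * (x / y)"
      using E[of 1 1] v0' v1' by simp
    also have "\<dots> = u" using h unfolding u_def by (simp add: divide_simps)
    finally show "integral\<^sup>L M (\<lambda>w. V 0 w * V 1 w) = u" .
    show "integrable M (\<lambda>w. V 0 w * V 1 w)" using E[of 1 1] by simp
  qed
  have s2: "integral\<^sup>L M (V 0) = e" and s2i: "integrable M (V 0)"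
    using v0' v0(1)[of 1] by (simp_all add: e_def)
  have q1: "integral\<^sup>L M (\<lambda>w. (V 0 w * V 1 w)\<^sup>2) = v"
  proof -
    have "integral\<^sup>L M (\<lambda>w. (V 0 w * V 1 w)\<^sup>2) = 2 / (x * (x + 1)) * (x * (x + 1) / (y * (y + 1)))"
      using E[of 2 2] v0' v1' by (simp add: power_mult_distrib)
    also have "\<dots> = v" using h unfolding v_def by (simp add: divide_simps)
    finally show ?thesis .
  qed
  have q2: "integral\<^sup>L M (\<lambda>w. (V 0 w)\<^sup>2) = f" using v0' by (simp add: f_def)
  have eq12: "(\<lambda>w. V 0 w * V 1 w * V 0 w) = (\<lambda>w. V 0 w ^ 2 * V 1 w ^ 1)"
    by (auto simp: fun_eq_iff power2_eq_square)
  have p12: "integral\<^sup>L M (\<lambda>w. V 0 w * V 1 w * V 0 w) = c"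
    and p12i: "integrable M (\<lambda>w. V 0 w * V 1 w * V 0 w)"
  proof -
    have "integral\<^sup>L M (\<lambda>w. V 0 w * V 1 w * V 0 w) = 2 / (x * (x + 1)) * (x / y)"
      unfolding eq12 using E[of 2 1] v0' v1' by simp
    also have "\<dots> = c" using h unfolding c_def by (simp add: divide_simps)
    finally show "integral\<^sup>L M (\<lambda>w. V 0 w * V 1 w * V 0 w) = c" .
    show "integrable M (\<lambda>w. V 0 w * V 1 w * V 0 w)" unfolding eq12 using E[of 2 1] by simp
  qed
  have om: "integral\<^sup>L M (\<lambda>w. (1 - V 0 w * V 1 w) * (1 - V 0 w)) = 1 - u - e + c"
    using E_one_minus[OF P s1i s2i p12i] s1 s2 p12 by simp
  have sq: "sqrt ((2 * u - v) * (2 * e - f) / (v * f)) = sqrt (x * y)"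
  proof -
    have 1: "(2 * u - v) / v = y" using h unfolding u_def v_def by (simp add: divide_simps)
    have 2: "(2 * e - f) / f = x" using h unfolding e_def f_def by (simp add: divide_simps)
    have "(2 * u - v) * (2 * e - f) / (v * f) = ((2 * u - v) / v) * ((2 * e - f) / f)"
      by simp
    thus ?thesis unfolding 1 2 by (simp add: mult.commute)
  qed
  have "C12 M (\<lambda>w. V 0 w * V 1 w) (V 0) = c / (1 - (1 - u - e + c)) * sqrt (x * y)"
    unfolding C12_def s1 s2 q1 q2 p12 om sq ..
  also have "c / (1 - (1 - u - e + c)) = 2 * x / ((x + 1) * (x + y - 1) - (x - 1))"
  proof -
    have "(x + 1) * (x + y - 1) > (x + 1) * 1"
      using xp yp by (intro mult_strict_left_mono) auto
    hence d: "(x + 1) * (x + y - 1) - (x - 1) > 0" by simp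
    hence d': "(x + 1) * (x + y - 1) - (x - 1) \<noteq> 0" by simp
    have "1 - (1 - u - e + c) = ((x + 1) * (x + y - 1) - (x - 1)) / (x * (x + 1) * y)"
      using h unfolding u_def c_def e_def apply (simp add: divide_simps) by algebra
    hence "c / (1 - (1 - u - e + c)) = c / (((x + 1) * (x + y - 1) - (x - 1)) / (x * (x + 1) * y))"
      by simp
    also have "\<dots> = 2 * x / ((x + 1) * (x + y - 1) - (x - 1))"
      using h d' unfolding c_def by (simp add: divide_simps)
    finally show ?thesis .
  qed
  also have "2 * x / ((x + 1) * (x + y - 1) - (x - 1)) * sqrt (x * y) =
     2 * (a1 + 1) / ((a1 + 2) * (2 * a1 + a2 + 1) - a1) * sqrt ((a1 + 1) * (a1 + a2 + 1))"
    unfolding x[symmetric] y[symmetric] by (simp add: algebra_simps)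
  finally show ?thesis .
qed


theorem corollary2:
  fixes M :: "'a measure" and a1 a2 :: real
  assumes "prob_space M" and "a1 > 0" and "a2 > 0"
  shows "(\<forall>V :: nat \<Rightarrow> 'a \<Rightarrow> real.
            prob_space.indep_vars M (\<lambda>_. borel) V {0, 1, 2} \<and>
            distributed M lborel (V 0) (beta_density (1 + a1) a2) \<and>
            distributed M lborel (V 1) (beta_density 1 a1) \<and>
            distributed M lborel (V 2) (beta_density 1 a1) \<longrightarrow>
            C12 M (\<lambda>w. V 0 w * V 1 w) (\<lambda>w. V 0 w * V 2 w) =
              (a1 + a2 + 1) * (a1 + 2) / (2 * (a1 + 1) * (a1 + a2 + 2) - (a1 + 2)))
       \<and> (\<forall>V :: nat \<Rightarrow> 'a \<Rightarrow> real.
            prob_space.indep_vars M (\<lambda>_. borel) V {0, 1} \<and>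
            distributed M lborel (V 0) (beta_density 1 a1) \<and>
            distributed M lborel (V 1) (beta_density (1 + a1) a2) \<longrightarrow>
            C12 M (\<lambda>w. V 0 w * V 1 w) (V 0) =
              2 * (a1 + 1) / ((a1 + 2) * (2 * a1 + a2 + 1) - a1) *
              sqrt ((a1 + 1) * (a1 + a2 + 1)))"
    using partA[OF assms] partB[OF assms] by blast

end
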